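(* Let $c\ge 1$. If there exists a $c$-competitive online algorithm for line chasing in $\mathbb{R}^2$, then there exists a $c$-competitive rts-oblivious online algorithm for line chasing in $\mathbb{R}^2$.
   Context: Line chasing in $\mathbb{R}^2$: given an initial point $P_0$ and lines $X_1,\dots,X_m$ revealed one at a time, an online algorithm chooses $P_t\in X_t$ knowing only $P_0,X_1,\dots,X_t$. Formally an algorithm is a function $\mathcal{A}$ with $\mathcal{A}(P_0)=P_0$ and $\mathcal{A}(P_0,X_1,\dots,X_t)\in X_t$ for all $P_0$ and lines $X_1,\dots,X_t$; its cost on $P_0,X_1,\dots,X_m$ is $\sum_{t=1}^m|\mathcal{A}(P_0,X_1,\dots,X_{t-1})\,\mathcal{A}(P_0,X_1,\dots,X_t)|$ (Euclidean distances). It is $c$-competitive if on every input its cost is at most $c$ times $\min\{\sum_t|A_{t-1}A_t|: A_0=P_0, A_t\in X_t\}$. A direct similarity of $\mathbb{R}^2$ is a bijection $f$ that is a composition of a rotation, a translation and a scaling by some factor $r_f>0$. $\mathcal{A}$ is rts-oblivious if $\mathcal{A}(f(P_0),f(X_1),\dots,f(X_t))=f(\mathcal{A}(P_0,X_1,\dots,X_t))$ for every $P_0$, all lines $X_i$, and every direct similarity $f$. *)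

theory Defs
  imports "HOL-Analysis.Analysis"
begin

text \<open>The plane R^2 is modelled as the complex numbers (Euclidean distance = dist).\<close>

definition is_line :: "complex set \<Rightarrow> bool" where
  "is_line L \<longleftrightarrow> (\<exists>p d. d \<noteq> 0 \<and> L = {p + complex_of_real t * d | t. True})"

text \<open>An online algorithm: maps the initial point and the list of lines revealed so far
  to the current position.\<close>
type_synonym alg = "complex \<Rightarrow> complex set list \<Rightarrow> complex"

definition is_online_alg :: "alg \<Rightarrow> bool" where
  "is_online_alg A \<longleftrightarrow>
     (\<forall>P0. A P0 [] = P0) \<and>
     (\<forall>P0 Xs. Xs \<noteq> [] \<and> (\<forall>X\<in>set Xs. is_line X) \<longrightarrow> A P0 Xs \<in> last Xs)"

definition alg_cost :: "alg \<Rightarrow> complex \<Rightarrow> complex set list \<Rightarrow> real" where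
  "alg_cost A P0 Xs = (\<Sum>t=1..length Xs. dist (A P0 (take (t - 1) Xs)) (A P0 (take t Xs)))"

definition opt_cost :: "complex \<Rightarrow> complex set list \<Rightarrow> real" where
  "opt_cost P0 Xs = Inf {(\<Sum>t=1..length Xs. dist (a (t - 1)) (a t)) | a.
       a 0 = P0 \<and> (\<forall>t\<in>{1..length Xs}. a t \<in> Xs ! (t - 1))}"

definition competitive :: "real \<Rightarrow> alg \<Rightarrow> bool" where
  "competitive c A \<longleftrightarrow>
     (\<forall>P0 Xs. (\<forall>X\<in>set Xs. is_line X) \<longrightarrow> alg_cost A P0 Xs \<le> c * opt_cost P0 Xs)"

definition direct_similarity :: "(complex \<Rightarrow> complex) \<Rightarrow> bool" where
  "direct_similarity f \<longleftrightarrow>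
     (\<exists>\<theta> r b. r > 0 \<and> f = (\<lambda>z. complex_of_real r * (cis \<theta> * z) + b))"

definition rts_oblivious :: "alg \<Rightarrow> bool" where
  "rts_oblivious A \<longleftrightarrow>
     (\<forall>f P0 Xs. direct_similarity f \<and> (\<forall>X\<in>set Xs. is_line X) \<longrightarrow>
        A (f P0) (map (\<lambda>X. f ` X) Xs) = f (A P0 Xs))"

end

theory Submission
  imports Defs
begin

lemma line_alt:
  assumes "d \<noteq> 0"
  shows "{p + complex_of_real t * d | t. True} = {z. Im ((z - p) / d) = 0}"
proof (intro set_eqI iffI)
  fix z assume "z \<in> {p + complex_of_real t * d | t. True}"
  then obtain t where "z = p + complex_of_real t * d" by auto
  then show "z \<in> {z. Im ((z - p) / d) = 0}" using assms by simp
next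
  fix z assume "z \<in> {z. Im ((z - p) / d) = 0}"
  hence "(z - p) / d = complex_of_real (Re ((z - p) / d))" by (simp add: complex_eq_iff)
  hence "z = p + complex_of_real (Re ((z - p) / d)) * d" using assms by (simp add: field_simps)
  then show "z \<in> {p + complex_of_real t * d | t. True}" by blast
qed

lemma line_closed: assumes "is_line Y" shows "closed Y"
proof -
  from assms obtain p d where d: "d \<noteq> 0" and Y: "Y = {p + complex_of_real t * d | t. True}"
    unfolding is_line_def by blast
  have "closed {z. Im ((z - p) / d) = 0}"
    using d by (intro closed_Collect_eq continuous_intros) auto
  then show ?thesis using Y line_alt[OF d] by simp
qed

lemma line_convex: assumes "is_line Y" shows "convex Y"
proof -
  from assms obtain p d where d: "d \<noteq> 0" and Y: "Y = {p + complex_of_real t * d | t. True}"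
    unfolding is_line_def by blast
  show ?thesis unfolding convex_def
  proof (intro ballI allI impI)
    fix x y :: complex and u v :: real
    assume x: "x \<in> Y" and y: "y \<in> Y" and h: "0 \<le> u" "0 \<le> v" and uv: "u + v = 1"
    obtain s where xs: "x = p + complex_of_real s * d" using x Y by blast
    obtain t where yt: "y = p + complex_of_real t * d" using y Y by blast
    have uv': "complex_of_real u + complex_of_real v = 1" using uv by (metis of_real_add of_real_1)
    have "u *\<^sub>R x + v *\<^sub>R y
        = (complex_of_real u + complex_of_real v) * p + complex_of_real (u * s + v * t) * d"
      unfolding xs yt by (simp add: scaleR_conv_of_real algebra_simps)
    also have "\<dots> = p + complex_of_real (u * s + v * t) * d" using uv' by simp
    finally show "u *\<^sub>R x + v *\<^sub>R y \<in> Y" unfolding Y by blast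
  qed
qed

lemma line_ne: "is_line Y \<Longrightarrow> Y \<noteq> {}"
  unfolding is_line_def by blast

lemma line_image:
  assumes "is_line Y" "a \<noteq> 0"
  shows "is_line ((\<lambda>z. a * z + b) ` Y)"
proof -
  obtain p d where d: "d \<noteq> 0" and Y: "Y = {p + complex_of_real t * d | t. True}"
    using assms(1) unfolding is_line_def by blast
  have "(\<lambda>z. a * z + b) ` Y = {(a*p+b) + complex_of_real t * (a*d) | t. True}"
  proof (intro set_eqI iffI)
    fix z assume "z \<in> (\<lambda>z. a * z + b) ` Y"
    then obtain t where "z = a * (p + complex_of_real t * d) + b" unfolding Y by blast
    then have "z = (a*p+b) + complex_of_real t * (a*d)" by (simp add: algebra_simps)
    then show "z \<in> {(a*p+b) + complex_of_real t * (a*d) | t. True}" by blast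
  next
    fix z assume "z \<in> {(a*p+b) + complex_of_real t * (a*d) | t. True}"
    then obtain t where "z = (a*p+b) + complex_of_real t * (a*d)" by blast
    then have "z = a * (p + complex_of_real t * d) + b" by (simp add: algebra_simps)
    moreover have "p + complex_of_real t * d \<in> Y" unfolding Y by blast
    ultimately show "z \<in> (\<lambda>z. a * z + b) ` Y" by blast
  qed
  then show ?thesis unfolding is_line_def using d assms(2)
    by (intro exI[of _ "a*p+b"] exI[of _ "a*d"]) simp
qed

lemma cp_equiv:
  assumes "is_line Y" "a \<noteq> 0"
  shows "closest_point ((\<lambda>z. a * z + b) ` Y) (a * P + b) = a * closest_point Y P + b"
proof -
  let ?g = "\<lambda>z. a * z + b"
  have dg: "dist (?g x) (?g y) = cmod a * dist x y" for x y
    by (simp add: dist_norm algebra_simps flip: norm_mult)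
  have cl: "closed Y" "convex Y" "Y \<noteq> {}" using assms line_closed line_convex line_ne by auto
  have cl2: "closed (?g ` Y)" "convex (?g ` Y)"
    using line_image[OF assms] line_closed line_convex by auto
  show ?thesis
  proof (rule closest_point_unique[symmetric, OF cl2(2) cl2(1)])
    show "?g (closest_point Y P) \<in> ?g ` Y" using closest_point_in_set[OF cl(1) cl(3)] by blast
    show "\<forall>z\<in>?g ` Y. dist (?g P) (?g (closest_point Y P)) \<le> dist (?g P) z"
    proof
      fix w assume "w \<in> ?g ` Y"
      then obtain z where z: "z \<in> Y" "w = ?g z" by blast
      have "dist (?g P) (?g (closest_point Y P)) = cmod a * dist P (closest_point Y P)" by (rule dg)
      also have "\<dots> \<le> cmod a * dist P z"
        using closest_point_le[OF cl(1) z(1)] by (simp add: mult_left_mono)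
      also have "\<dots> = dist (?g P) w" using dg z(2) by simp
      finally show "dist (?g P) (?g (closest_point Y P)) \<le> dist (?g P) w" .
    qed
  qed
qed


definition canon :: "complex \<Rightarrow> complex set \<Rightarrow> complex \<Rightarrow> complex" where
  "canon P Y z = (z - P) / (closest_point Y P - P)"

definition uncanon :: "complex \<Rightarrow> complex set \<Rightarrow> complex \<Rightarrow> complex" where
  "uncanon P Y w = P + w * (closest_point Y P - P)"

definition Alg :: "alg \<Rightarrow> alg" where
  "Alg A P0 Xs = (let Ys = dropWhile (\<lambda>X. P0 \<in> X) Xs in
     if Ys = [] then P0 else uncanon P0 (hd Ys) (A 0 (map (\<lambda>X. canon P0 (hd Ys) ` X) Ys)))"

lemma cp_ne:
  assumes "is_line Y" "P \<notin> Y"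
  shows "closest_point Y P \<noteq> P"
  using closest_point_in_set[OF line_closed[OF assms(1)] line_ne[OF assms(1)], of P] assms(2) by auto

lemma canon_affine:
  assumes "closest_point Y P \<noteq> P"
  shows "canon P Y = (\<lambda>z. (1 / (closest_point Y P - P)) * z + (- P / (closest_point Y P - P)))"
  using assms by (auto simp: canon_def diff_divide_distrib)

lemma uncanon_canon:
  assumes "closest_point Y P \<noteq> P"
  shows "uncanon P Y (canon P Y z) = z"
  using assms by (simp add: canon_def uncanon_def)

lemma dropWhile_map_img:
  assumes "inj g"
  shows "dropWhile (\<lambda>X. g P \<in> X) (map (\<lambda>X. g ` X) Xs) = map (\<lambda>X. g ` X) (dropWhile (\<lambda>X. P \<in> X) Xs)"
  using assms by (induction Xs) (auto simp: inj_image_mem_iff)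

lemma alg_equiv:
  assumes "a \<noteq> 0" "g = (\<lambda>z. a * z + b)" "\<forall>X\<in>set Xs. is_line X"
  shows "Alg A (g P0) (map (\<lambda>X. g ` X) Xs) = g (Alg A P0 Xs)"
proof -
  have inj: "inj g" using assms(1,2) by (auto simp: inj_def)
  define Ys where "Ys = dropWhile (\<lambda>X. P0 \<in> X) Xs"
  have D: "dropWhile (\<lambda>X. g P0 \<in> X) (map (\<lambda>X. g ` X) Xs) = map (\<lambda>X. g ` X) Ys"
    unfolding Ys_def by (rule dropWhile_map_img[OF inj])
  show ?thesis
  proof (cases "Ys = []")
    case True
    then show ?thesis unfolding Alg_def Let_def D Ys_def[symmetric] by simp
  next
    case False
    define Y where "Y = hd Ys"
    have Yl: "is_line Y" using False assms(3) unfolding Y_def Ys_def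
      by (metis hd_in_set set_dropWhileD)
    have cpg: "closest_point (g ` Y) (g P0) = g (closest_point Y P0)"
      using cp_equiv[OF Yl assms(1)] assms(2) by simp
    have hdm: "hd (map (\<lambda>X. g ` X) Ys) = g ` Y" using False Y_def by (simp add: hd_map)
    have cc: "canon (g P0) (g ` Y) (g z) = canon P0 Y z" for z
    proof -
      have "g z - g P0 = a * (z - P0)" "g (closest_point Y P0) - g P0 = a * (closest_point Y P0 - P0)"
        using assms(2) by (simp_all add: algebra_simps)
      then show ?thesis unfolding canon_def cpg using assms(1) by simp
    qed
    have cc2: "canon (g P0) (g ` Y) ` (g ` X) = canon P0 Y ` X" for X
      unfolding image_image cc by simp
    have uc: "uncanon (g P0) (g ` Y) w = g (uncanon P0 Y w)" for w
      unfolding uncanon_def cpg using assms(2) by (simp add: algebra_simps)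
    have M: "map (\<lambda>X. canon (g P0) (g ` Y) ` X) (map (\<lambda>X. g ` X) Ys) = map (\<lambda>X. canon P0 Y ` X) Ys"
      by (simp add: cc2)
    have "Alg A (g P0) (map (\<lambda>X. g ` X) Xs) = uncanon (g P0) (g ` Y)
        (A 0 (map (\<lambda>X. canon (g P0) (g ` Y) ` X) (map (\<lambda>X. g ` X) Ys)))"
      unfolding Alg_def Let_def D hdm using False by (simp del: map_map)
    also have "\<dots> = g (uncanon P0 Y (A 0 (map (\<lambda>X. canon P0 Y ` X) Ys)))"
      by (simp only: M uc)
    also have "\<dots> = g (Alg A P0 Xs)"
      unfolding Alg_def Let_def Ys_def[symmetric] Y_def[symmetric] using False by simp
    finally show ?thesis .
  qed
qed

lemma opt_le:
  assumes "a 0 = P0" "\<forall>t\<in>{1..length Xs}. a t \<in> Xs ! (t - 1)"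
  shows "opt_cost P0 Xs \<le> (\<Sum>t=1..length Xs. dist (a (t - 1)) (a t))"
  unfolding opt_cost_def
proof (rule cInf_lower)
  show "(\<Sum>t=1..length Xs. dist (a (t - 1)) (a t)) \<in> {(\<Sum>t=1..length Xs. dist (a (t - 1)) (a t)) | a.
       a 0 = P0 \<and> (\<forall>t\<in>{1..length Xs}. a t \<in> Xs ! (t - 1))}" using assms by blast
  show "bdd_below {(\<Sum>t=1..length Xs. dist (a (t - 1)) (a t)) | a.
       a 0 = P0 \<and> (\<forall>t\<in>{1..length Xs}. a t \<in> Xs ! (t - 1))}"
    by (rule bdd_belowI[of _ 0]) (auto intro: sum_nonneg)
qed

lemma opt_ge:
  assumes "\<forall>X\<in>set Xs. X \<noteq> {}"
    and "\<And>a. a 0 = P0 \<Longrightarrow> \<forall>t\<in>{1..length Xs}. a t \<in> Xs ! (t - 1) \<Longrightarrow>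
            v \<le> (\<Sum>t=1..length Xs. dist (a (t - 1)) (a t))"
  shows "v \<le> opt_cost P0 Xs"
  unfolding opt_cost_def
proof (rule cInf_greatest)
  define a0 where "a0 t = (if t = 0 then P0 else (SOME x. x \<in> Xs ! (t - 1)))" for t
  have "\<forall>t\<in>{1..length Xs}. a0 t \<in> Xs ! (t - 1)"
  proof
    fix t assume t: "t \<in> {1..length Xs}"
    then have "Xs ! (t - 1) \<in> set Xs" by auto
    then have "Xs ! (t - 1) \<noteq> {}" using assms(1) by blast
    then show "a0 t \<in> Xs ! (t - 1)" using t unfolding a0_def by (auto intro: someI_ex)
  qed
  moreover have "a0 0 = P0" by (simp add: a0_def)
  ultimately show "{(\<Sum>t=1..length Xs. dist (a (t - 1)) (a t)) | a.
       a 0 = P0 \<and> (\<forall>t\<in>{1..length Xs}. a t \<in> Xs ! (t - 1))} \<noteq> {}" by blast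
next
  fix x assume "x \<in> {(\<Sum>t=1..length Xs. dist (a (t - 1)) (a t)) | a.
       a 0 = P0 \<and> (\<forall>t\<in>{1..length Xs}. a t \<in> Xs ! (t - 1))}"
  then show "v \<le> x" using assms(2) by blast
qed

lemma sum_shift1: "(\<Sum>t=1..Suc n. f t) = f 1 + (\<Sum>s=1..n. f (Suc s))"
  by (induction n) (auto simp: ac_simps)

lemma opt_cons:
  assumes "\<forall>X\<in>set (T # Xs). X \<noteq> {}"
  shows "opt_cost P0 Xs \<le> opt_cost P0 (T # Xs)"
proof (rule opt_ge)
  show "\<forall>X\<in>set (T # Xs). X \<noteq> {}" by fact
  fix a assume a0: "a 0 = P0" and at: "\<forall>t\<in>{1..length (T # Xs)}. a t \<in> (T # Xs) ! (t - 1)"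
  define a' where "a' s = (if s = 0 then P0 else a (Suc s))" for s
  have "\<forall>t\<in>{1..length Xs}. a' t \<in> Xs ! (t - 1)"
  proof
    fix t assume t: "t \<in> {1..length Xs}"
    then have "Suc t \<in> {1..length (T # Xs)}" by auto
    then have "a (Suc t) \<in> (T # Xs) ! t" using at by fastforce
    then show "a' t \<in> Xs ! (t - 1)" using t unfolding a'_def by (cases t) auto
  qed
  then have "opt_cost P0 Xs \<le> (\<Sum>t=1..length Xs. dist (a' (t - 1)) (a' t))"
    by (intro opt_le) (auto simp: a'_def)
  also have "\<dots> \<le> (\<Sum>s=1..length Xs. dist (a s) (a (Suc s)) + (if s = 1 then dist (a 0) (a 1) else 0))"
  proof (rule sum_mono)
    fix s assume s: "s \<in> {1..length Xs}"
    show "dist (a' (s - 1)) (a' s) \<le> dist (a s) (a (Suc s)) + (if s = 1 then dist (a 0) (a 1) else 0)"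
    proof (cases "s = 1")
      case True
      then show ?thesis unfolding a'_def using a0 dist_triangle[of "a 0" "a 2" "a 1"]
        by (simp add: numeral_2_eq_2 dist_commute)
    next
      case False
      then show ?thesis using s unfolding a'_def by (cases s) auto
    qed
  qed
  also have "\<dots> \<le> dist (a 0) (a 1) + (\<Sum>s=1..length Xs. dist (a s) (a (Suc s)))"
    by (simp add: sum.distrib)
  also have "\<dots> = (\<Sum>t=1..length (T # Xs). dist (a (t - 1)) (a t))"
  proof -
    have "(\<Sum>t=1..Suc (length Xs). dist (a (t - 1)) (a t)) =
      dist (a (1 - 1)) (a 1) + (\<Sum>s=1..length Xs. dist (a (Suc s - 1)) (a (Suc s)))"
      by (rule sum_shift1)
    then show ?thesis by simp
  qed
  finally show "opt_cost P0 Xs \<le> (\<Sum>t=1..length (T # Xs). dist (a (t - 1)) (a t))" .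
qed

lemma opt_append:
  assumes "\<forall>X\<in>set (Ts @ Xs). X \<noteq> {}"
  shows "opt_cost P0 Xs \<le> opt_cost P0 (Ts @ Xs)"
  using assms
proof (induction Ts)
  case Nil then show ?case by simp
next
  case (Cons T Ts)
  then have "opt_cost P0 Xs \<le> opt_cost P0 (Ts @ Xs)" by simp
  also have "\<dots> \<le> opt_cost P0 (T # Ts @ Xs)" using Cons.prems by (intro opt_cons) simp
  finally show ?case by simp
qed

lemma opt_scale:
  assumes "a \<noteq> 0" "g = (\<lambda>z. a * z + b)" "\<forall>X\<in>set Xs. X \<noteq> {}"
  shows "opt_cost (g P0) (map (\<lambda>X. g ` X) Xs) \<le> cmod a * opt_cost P0 Xs"
proof -
  have "opt_cost (g P0) (map (\<lambda>X. g ` X) Xs) / cmod a \<le> opt_cost P0 Xs"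
  proof (rule opt_ge[OF assms(3)])
    fix \<alpha> assume a0: "\<alpha> 0 = P0" and at: "\<forall>t\<in>{1..length Xs}. \<alpha> t \<in> Xs ! (t - 1)"
    have "opt_cost (g P0) (map (\<lambda>X. g ` X) Xs) \<le>
        (\<Sum>t=1..length (map (\<lambda>X. g ` X) Xs). dist ((g \<circ> \<alpha>) (t - 1)) ((g \<circ> \<alpha>) t))"
      using a0 at by (intro opt_le) auto
    also have "\<dots> = cmod a * (\<Sum>t=1..length Xs. dist (\<alpha> (t - 1)) (\<alpha> t))"
      unfolding sum_distrib_left using assms(2)
      by (intro sum.cong) (auto simp: dist_norm algebra_simps simp flip: norm_mult)
    finally show "opt_cost (g P0) (map (\<lambda>X. g ` X) Xs) / cmod a \<le> (\<Sum>t=1..length Xs. dist (\<alpha> (t - 1)) (\<alpha> t))"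
      using assms(1) by (simp add: divide_le_eq mult.commute)
  qed
  then show ?thesis using assms(1) by (simp add: divide_le_eq mult.commute)
qed


lemma dropWhile_take:
  assumes "Ys = dropWhile P Xs" "k = length (takeWhile P Xs)"
  shows "dropWhile P (take t Xs) = take (t - k) Ys"
proof -
  have X: "Xs = takeWhile P Xs @ Ys" using assms(1) by simp
  have "take t Xs = take t (takeWhile P Xs) @ take (t - k) Ys"
    by (subst X) (simp add: take_append assms(2))
  moreover have "\<forall>x\<in>set (take t (takeWhile P Xs)). P x"
    by (meson in_set_takeD set_takeWhileD)
  ultimately have "dropWhile P (take t Xs) = dropWhile P (take (t - k) Ys)" by simp
  also have "\<dots> = take (t - k) Ys"
  proof (cases "t - k")
    case 0 then show ?thesis by simp
  next
    case (Suc j)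
    show ?thesis
    proof (cases Ys)
      case Nil then show ?thesis by simp
    next
      case (Cons y ys)
      then have "\<not> P y" using assms(1) hd_dropWhile[of P Xs] by auto
      then show ?thesis using Suc Cons by simp
    qed
  qed
  finally show ?thesis .
qed

lemma sum_shift_k:
  fixes k m :: nat and G :: "nat \<Rightarrow> nat \<Rightarrow> real"
  assumes "\<And>x. G x x = 0"
  shows "(\<Sum>t=1..k+m. G (t - 1 - k) (t - k)) = (\<Sum>s=1..m. G (s - 1) s)"
proof (induction k)
  case 0 then show ?case by simp
next
  case (Suc k)
  have "(\<Sum>t=1..Suc k + m. G (t - 1 - Suc k) (t - Suc k)) =
        G (1 - 1 - Suc k) (1 - Suc k) + (\<Sum>s=1..k+m. G (Suc s - 1 - Suc k) (Suc s - Suc k))"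
    using sum_shift1[of "\<lambda>t. G (t - 1 - Suc k) (t - Suc k)" "k + m"] by simp
  also have "\<dots> = (\<Sum>s=1..k+m. G (s - 1 - k) (s - k))"
    using assms by (simp add: diff_diff_add)
  finally show ?case using Suc.IH by simp
qed


lemma alg_competitive:
  assumes online: "is_online_alg A" and comp: "competitive c A" and c0: "c \<ge> 0"
    and lines: "\<forall>X\<in>set Xs. is_line X"
  shows "alg_cost (Alg A) P0 Xs \<le> c * opt_cost P0 Xs"
proof -
  define Ys where "Ys = dropWhile (\<lambda>X. P0 \<in> X) Xs"
  define k where "k = length (takeWhile (\<lambda>X. P0 \<in> X) Xs)"
  have DT: "dropWhile (\<lambda>X. P0 \<in> X) (take t Xs) = take (t - k) Ys" for t
    by (rule dropWhile_take[OF Ys_def k_def])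
  have ne: "\<forall>X\<in>set Xs. X \<noteq> {}" using lines line_ne by blast
  have opt0: "0 \<le> opt_cost P0 Xs"
    by (rule opt_ge[OF ne]) (auto intro: sum_nonneg)
  have A0: "A P [] = P" for P using online unfolding is_online_alg_def by blast
  have lenX: "length Xs = k + length Ys" unfolding k_def Ys_def
    by (metis length_append takeWhile_dropWhile_id)
  show ?thesis
  proof (cases "Ys = []")
    case True
    have "Alg A P0 (take t Xs) = P0" for t
      unfolding Alg_def Let_def DT using True by simp
    then have "alg_cost (Alg A) P0 Xs = 0" unfolding alg_cost_def by simp
    then show ?thesis using opt0 c0 by simp
  next
    case False
    define Y where "Y = hd Ys"
    have PY: "P0 \<notin> Y" using False hd_dropWhile[of "\<lambda>X. P0 \<in> X" Xs] unfolding Y_def Ys_def by simp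
    have Yl: "is_line Y" using False lines unfolding Y_def Ys_def
      by (metis hd_in_set set_dropWhileD)
    have FP: "closest_point Y P0 \<noteq> P0" by (rule cp_ne[OF Yl PY])
    define w where "w = 1 / (closest_point Y P0 - P0)"
    define b0 where "b0 = - P0 / (closest_point Y P0 - P0)"
    have w0: "w \<noteq> 0" using FP by (simp add: w_def)
    have gdef: "canon P0 Y = (\<lambda>z. w * z + b0)" using canon_affine[OF FP] by (simp add: w_def b0_def)
    define Zs where "Zs = map (\<lambda>X. canon P0 Y ` X) Ys"
    define B where "B j = A 0 (take j Zs)" for j
    define \<rho> where "\<rho> = cmod (closest_point Y P0 - P0)"
    have Ysl: "\<forall>X\<in>set Ys. is_line X" using lines unfolding Ys_def by (meson set_dropWhileD)
    have Zsl: "\<forall>X\<in>set Zs. is_line X" unfolding Zs_def gdef using Ysl line_image[OF _ w0] by auto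
    have key: "Alg A P0 (take t Xs) = uncanon P0 Y (B (t - k))" for t
    proof (cases "t - k = 0")
      case True
      then show ?thesis unfolding Alg_def Let_def DT B_def using A0 by (simp add: uncanon_def)
    next
      case False
      then have "take (t - k) Ys \<noteq> []" "hd (take (t - k) Ys) = Y"
        using \<open>Ys \<noteq> []\<close> by (auto simp: Y_def hd_take)
      then show ?thesis unfolding Alg_def Let_def DT B_def Zs_def by (simp add: take_map)
    qed
    have du: "dist (uncanon P0 Y x) (uncanon P0 Y y) = \<rho> * dist x y" for x y
      unfolding uncanon_def \<rho>_def dist_norm
      by (simp add: algebra_simps flip: norm_mult)
    have "alg_cost (Alg A) P0 Xs = (\<Sum>t=1..k + length Ys. \<rho> * dist (B (t - 1 - k)) (B (t - k)))"
      unfolding alg_cost_def lenX key du by simp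
    also have "\<dots> = \<rho> * (\<Sum>t=1..k + length Ys. dist (B (t - 1 - k)) (B (t - k)))"
      by (simp add: sum_distrib_left)
    also have "(\<Sum>t=1..k + length Ys. dist (B (t - 1 - k)) (B (t - k))) = (\<Sum>s=1..length Ys. dist (B (s - 1)) (B s))"
      by (rule sum_shift_k[of "\<lambda>x y. dist (B x) (B y)"]) simp
    also have "\<dots> = alg_cost A 0 Zs" unfolding alg_cost_def B_def Zs_def by simp
    finally have ac: "alg_cost (Alg A) P0 Xs = \<rho> * alg_cost A 0 Zs" .
    have r0: "\<rho> \<ge> 0" unfolding \<rho>_def by simp
    have rw: "\<rho> * cmod w = 1" unfolding \<rho>_def w_def using FP by (simp add: norm_divide)
    have c1: "alg_cost A 0 Zs \<le> c * opt_cost 0 Zs" using comp Zsl unfolding competitive_def by blast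
    have cP: "canon P0 Y P0 = 0" by (simp add: canon_def)
    have c2: "opt_cost 0 Zs \<le> cmod w * opt_cost P0 Ys"
      using opt_scale[OF w0 gdef, of Ys P0] Ysl line_ne unfolding Zs_def cP by blast
    have c3: "opt_cost P0 Ys \<le> opt_cost P0 Xs"
      using opt_append[of "takeWhile (\<lambda>X. P0 \<in> X) Xs" Ys P0] ne unfolding Ys_def by simp
    have "alg_cost (Alg A) P0 Xs \<le> \<rho> * (c * opt_cost 0 Zs)" unfolding ac
      using c1 r0 by (rule mult_left_mono)
    also have "\<dots> \<le> \<rho> * (c * (cmod w * opt_cost P0 Ys))"
      using c2 c0 r0 by (intro mult_left_mono) auto
    also have "\<dots> = c * opt_cost P0 Ys" using rw by (simp add: algebra_simps)
    also have "\<dots> \<le> c * opt_cost P0 Xs" using c3 c0 by (rule mult_left_mono)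
    finally show ?thesis .
  qed
qed

lemma alg_online:
  assumes "is_online_alg A"
  shows "is_online_alg (Alg A)"
  unfolding is_online_alg_def
proof (intro conjI allI impI)
  fix P0 show "Alg A P0 [] = P0" by (simp add: Alg_def)
next
  fix P0 Xs assume h: "Xs \<noteq> [] \<and> (\<forall>X\<in>set Xs. is_line X)"
  define Ys where "Ys = dropWhile (\<lambda>X. P0 \<in> X) Xs"
  show "Alg A P0 Xs \<in> last Xs"
  proof (cases "Ys = []")
    case True
    then have "P0 \<in> last Xs" using h unfolding Ys_def by simp
    then show ?thesis unfolding Alg_def Let_def Ys_def[symmetric] using True by simp
  next
    case False
    define Y where "Y = hd Ys"
    have PY: "P0 \<notin> Y" using False hd_dropWhile[of "\<lambda>X. P0 \<in> X" Xs] unfolding Y_def Ys_def by simp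
    have Yl: "is_line Y" using False h unfolding Y_def Ys_def
      by (metis hd_in_set set_dropWhileD)
    have FP: "closest_point Y P0 \<noteq> P0" by (rule cp_ne[OF Yl PY])
    define w where "w = 1 / (closest_point Y P0 - P0)"
    define b0 where "b0 = - P0 / (closest_point Y P0 - P0)"
    have w0: "w \<noteq> 0" using FP by (simp add: w_def)
    have gdef: "canon P0 Y = (\<lambda>z. w * z + b0)" using canon_affine[OF FP] by (simp add: w_def b0_def)
    define Zs where "Zs = map (\<lambda>X. canon P0 Y ` X) Ys"
    have Ysl: "\<forall>X\<in>set Ys. is_line X" using h unfolding Ys_def by (meson set_dropWhileD)
    have Zsl: "\<forall>X\<in>set Zs. is_line X" unfolding Zs_def gdef using Ysl line_image[OF _ w0] by auto
    have "Zs \<noteq> []" using False Zs_def by simp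
    then have "A 0 Zs \<in> last Zs" using assms Zsl unfolding is_online_alg_def by blast
    moreover have "last Zs = canon P0 Y ` last Ys" using False by (simp add: Zs_def last_map)
    moreover have "last Ys = last Xs" using False unfolding Ys_def
      by (metis last_append takeWhile_dropWhile_id)
    ultimately obtain y where y: "y \<in> last Xs" "A 0 Zs = canon P0 Y y" by auto
    have "Alg A P0 Xs = uncanon P0 Y (A 0 Zs)"
      unfolding Alg_def Let_def Ys_def[symmetric] Y_def[symmetric] Zs_def using False by simp
    also have "\<dots> = y" using y(2) uncanon_canon[OF FP] by simp
    finally show ?thesis using y(1) by simp
  qed
qed

lemma alg_rts:
  shows "rts_oblivious (Alg A)"
  unfolding rts_oblivious_def
proof (intro allI impI)
  fix f P0 Xs assume h: "direct_similarity f \<and> (\<forall>X\<in>set Xs. is_line X)"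
  then obtain \<theta> r b where r: "r > 0" and f: "f = (\<lambda>z. complex_of_real r * (cis \<theta> * z) + b)"
    unfolding direct_similarity_def by blast
  define a where "a = complex_of_real r * cis \<theta>"
  have a0: "a \<noteq> 0" using r by (simp add: a_def)
  have fa: "f = (\<lambda>z. a * z + b)" unfolding f a_def by (simp add: mult.assoc)
  show "Alg A (f P0) (map (\<lambda>X. f ` X) Xs) = f (Alg A P0 Xs)"
    by (rule alg_equiv[OF a0 fa]) (use h in blast)
qed

theorem mainTheorem3:
  fixes c :: real
  assumes "c \<ge> 1"
    and "\<exists>A. is_online_alg A \<and> competitive c A"
  shows "\<exists>A. is_online_alg A \<and> competitive c A \<and> rts_oblivious A"
proof -
  obtain A where A: "is_online_alg A" "competitive c A" using assms(2) by blast
  have "competitive c (Alg A)"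
    unfolding competitive_def using alg_competitive[OF A] assms(1) by simp
  then show ?thesis using alg_online[OF A(1)] alg_rts by blast
qed

end
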